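(* If $G=(V,E)$ is weakly observable and $|V|\ge2$, then for any player algorithm and any time horizon $T$ there exists a sequence of loss functions $\ell_1,\dots,\ell_T:V\to[0,1]$ such that the player's expected regret in the online learning problem with feedback graph $G$ is at least $\tfrac18 T^{2/3}$.
   Context: Let $G=(V,E)$ be a directed graph (self-loops allowed), $N^{\mathrm{in}}(i)=\{j:(j,i)\in E\}$, $N^{\mathrm{out}}(i)=\{j:(i,j)\in E\}$. A vertex $i$ is observable if $N^{\mathrm{in}}(i)\ne\emptyset$; strongly observable if $i\in N^{\mathrm{in}}(i)$ or $V\setminus\{i\}\subseteq N^{\mathrm{in}}(i)$ (or both); $G$ is weakly observable if every vertex is observable but not every vertex is strongly observable. Online learning with feedback graph $G$: the environment fixes in advance losses $\ell_t:V\to[0,1]$; on round $t$ the player chooses (possibly randomly) $I_t\in V$ based on past observations, incurs $\ell_t(I_t)$, and observes only $\{(j,\ell_t(j)):j\in N^{\mathrm{out}}(I_t)\}$. Expected regret: $\mathbb{E}[\sum_{t=1}^T\ell_t(I_t)]-\min_{i\in V}\sum_{t=1}^T\ell_t(i)$. *)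

theory Defs
  imports "HOL-Probability.Probability"
begin

text \<open>A directed graph on the (finite) vertex type 'v is given by its edge set E;
  self-loops are allowed.\<close>

definition N_in :: "('v \<times> 'v) set \<Rightarrow> 'v \<Rightarrow> 'v set" where
  "N_in E i = {j. (j, i) \<in> E}"

definition N_out :: "('v \<times> 'v) set \<Rightarrow> 'v \<Rightarrow> 'v set" where
  "N_out E i = {j. (i, j) \<in> E}"

definition observable :: "('v \<times> 'v) set \<Rightarrow> 'v \<Rightarrow> bool" where
  "observable E i \<longleftrightarrow> N_in E i \<noteq> {}"

definition strongly_observable :: "('v \<times> 'v) set \<Rightarrow> 'v \<Rightarrow> bool" where
  "strongly_observable E i \<longleftrightarrow> i \<in> N_in E i \<or> UNIV - {i} \<subseteq> N_in E i"

definition weakly_observable :: "('v \<times> 'v) set \<Rightarrow> bool" where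
  "weakly_observable E \<longleftrightarrow>
     (\<forall>i. observable E i) \<and> \<not> (\<forall>i. strongly_observable E i)"

definition feedback :: "('v \<times> 'v) set \<Rightarrow> 'v \<Rightarrow> ('v \<Rightarrow> real) \<Rightarrow> ('v \<Rightarrow> real option)" where
  "feedback E i l = (\<lambda>j. if j \<in> N_out E i then Some (l j) else None)"

type_synonym 'v history = "('v \<times> ('v \<Rightarrow> real option)) list"

type_synonym 'v player = "'v history \<Rightarrow> 'v pmf"

text \<open>Distribution of the history after t rounds, against the loss sequence l
  (round s, for s = 1,2,..., uses loss function l s).\<close>
fun hist_pmf :: "('v \<times> 'v) set \<Rightarrow> 'v player \<Rightarrow> (nat \<Rightarrow> 'v \<Rightarrow> real) \<Rightarrow> nat \<Rightarrow> 'v history pmf" where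
  "hist_pmf E P l 0 = return_pmf []"
| "hist_pmf E P l (Suc t) =
     bind_pmf (hist_pmf E P l t)
       (\<lambda>h. map_pmf (\<lambda>i. h @ [(i, feedback E i (l (Suc t)))]) (P h))"

text \<open>Cumulative loss incurred along a history (k-th entry is round k+1).\<close>
definition cum_loss :: "(nat \<Rightarrow> 'v \<Rightarrow> real) \<Rightarrow> 'v history \<Rightarrow> real" where
  "cum_loss l h = (\<Sum>k<length h. l (Suc k) (fst (h ! k)))"

definition expected_regret ::
  "('v::finite \<times> 'v) set \<Rightarrow> 'v player \<Rightarrow> (nat \<Rightarrow> 'v \<Rightarrow> real) \<Rightarrow> nat \<Rightarrow> real" where
  "expected_regret E P l T =
     measure_pmf.expectation (hist_pmf E P l T) (cum_loss l)
     - (MIN i. \<Sum>t=1..T. l t i)"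

end

theory Submission
  imports Defs
begin


lemma E_sum:
  assumes "finite S" "set_pmf p \<subseteq> S"
  shows "measure_pmf.expectation p f = (\<Sum>x\<in>S. pmf p x * f x)"
  using assms by (subst integral_measure_pmf_real[where A=S]) (auto simp: mult.commute)

lemma pmf_bind_sum:
  assumes "finite S" "set_pmf M \<subseteq> S"
  shows "pmf (bind_pmf M N) y = (\<Sum>x\<in>S. pmf M x * pmf (N x) y)"
  using assms by (simp add: pmf_bind E_sum)

lemma finite_set_bind:
  assumes "finite (set_pmf M)" "\<And>x. x \<in> set_pmf M \<Longrightarrow> finite (set_pmf (N x))"
  shows "finite (set_pmf (bind_pmf M N))"
  using assms by (simp add: set_bind_pmf)

lemma E_bind:
  fixes f :: "'b \<Rightarrow> real"
  assumes fM: "finite (set_pmf M)" and fN: "\<And>x. x \<in> set_pmf M \<Longrightarrow> finite (set_pmf (N x))"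
  shows "measure_pmf.expectation (bind_pmf M N) f
       = measure_pmf.expectation M (\<lambda>x. measure_pmf.expectation (N x) f)"
proof -
  define T where "T = set_pmf (bind_pmf M N)"
  have fT: "finite T" unfolding T_def using finite_set_bind[OF fM fN] .
  have sub: "\<And>x. x \<in> set_pmf M \<Longrightarrow> set_pmf (N x) \<subseteq> T" unfolding T_def by (auto simp: set_bind_pmf)
  have "measure_pmf.expectation (bind_pmf M N) f = (\<Sum>y\<in>T. pmf (bind_pmf M N) y * f y)"
    using fT by (rule E_sum) (simp add: T_def)
  also have "\<dots> = (\<Sum>y\<in>T. \<Sum>x\<in>set_pmf M. pmf M x * pmf (N x) y * f y)"
    by (simp add: pmf_bind_sum[OF fM] sum_distrib_right)
  also have "\<dots> = (\<Sum>x\<in>set_pmf M. pmf M x * (\<Sum>y\<in>T. pmf (N x) y * f y))"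
    by (subst sum.swap) (simp add: sum_distrib_left mult.assoc)
  also have "\<dots> = (\<Sum>x\<in>set_pmf M. pmf M x * measure_pmf.expectation (N x) f)"
    using E_sum[OF fT sub] by simp
  also have "\<dots> = measure_pmf.expectation M (\<lambda>x. measure_pmf.expectation (N x) f)"
    using E_sum[OF fM, symmetric] by simp
  finally show ?thesis .
qed

definition BC :: "'a set \<Rightarrow> 'a pmf \<Rightarrow> 'a pmf \<Rightarrow> real" where
  "BC S p q = (\<Sum>x\<in>S. sqrt (pmf p x * pmf q x))"

lemma BC_superset:
  assumes "finite S" "finite S'" "set_pmf p \<subseteq> S" "set_pmf p \<subseteq> S'"
  shows "BC S p q = BC S' p q"
proof -
  have "BC S p q = BC (S \<inter> S') p q" unfolding BC_def
    using assms by (intro sum.mono_neutral_right) (auto simp: set_pmf_iff)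
  also have "\<dots> = BC S' p q" unfolding BC_def
    using assms by (intro sum.mono_neutral_left) (auto simp: set_pmf_iff)
  finally show ?thesis .
qed

lemma BC_return: "finite B \<Longrightarrow> z \<in> B \<Longrightarrow> BC B (return_pmf z) (return_pmf z) = 1"
  unfolding BC_def by (simp add: indicator_def)

lemma sqrt_sum_ge:
  fixes a b :: "'a \<Rightarrow> real"
  assumes "\<And>x. x \<in> A \<Longrightarrow> 0 \<le> a x" "\<And>x. x \<in> A \<Longrightarrow> 0 \<le> b x"
  shows "(\<Sum>x\<in>A. sqrt (a x * b x)) \<le> sqrt ((\<Sum>x\<in>A. a x) * (\<Sum>x\<in>A. b x))"
proof -
  have "(\<Sum>x\<in>A. sqrt (a x) * sqrt (b x))\<^sup>2 \<le> (\<Sum>x\<in>A. (sqrt (a x))\<^sup>2) * (\<Sum>x\<in>A. (sqrt (b x))\<^sup>2)"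
    by (rule Cauchy_Schwarz_ineq_sum)
  also have "\<dots> = (\<Sum>x\<in>A. a x) * (\<Sum>x\<in>A. b x)" using assms by simp
  finally have "(\<Sum>x\<in>A. sqrt (a x * b x))\<^sup>2 \<le> (\<Sum>x\<in>A. a x) * (\<Sum>x\<in>A. b x)"
    by (simp add: real_sqrt_mult)
  thus ?thesis using real_le_rsqrt by blast
qed

lemma BC_bind:
  assumes fA: "finite A" and sA: "set_pmf p \<subseteq> A" "set_pmf q \<subseteq> A"
    and fB: "finite B" and sB: "\<And>x. x \<in> A \<Longrightarrow> set_pmf (K1 x) \<subseteq> B \<and> set_pmf (K2 x) \<subseteq> B"
  shows "BC B (bind_pmf p K1) (bind_pmf q K2) \<ge> (\<Sum>x\<in>A. sqrt (pmf p x * pmf q x) * BC B (K1 x) (K2 x))"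
proof -
  have "(\<Sum>x\<in>A. sqrt (pmf p x * pmf q x) * BC B (K1 x) (K2 x))
      = (\<Sum>y\<in>B. \<Sum>x\<in>A. sqrt ((pmf p x * pmf (K1 x) y) * (pmf q x * pmf (K2 x) y)))"
    unfolding BC_def by (subst sum.swap) (simp add: sum_distrib_left real_sqrt_mult[symmetric] ac_simps)
  also have "\<dots> \<le> (\<Sum>y\<in>B. sqrt ((\<Sum>x\<in>A. pmf p x * pmf (K1 x) y) * (\<Sum>x\<in>A. pmf q x * pmf (K2 x) y)))"
    by (intro sum_mono sqrt_sum_ge) auto
  also have "\<dots> = BC B (bind_pmf p K1) (bind_pmf q K2)"
    unfolding BC_def by (simp add: pmf_bind_sum[OF fA sA(1)] pmf_bind_sum[OF fA sA(2)])
  finally show ?thesis .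
qed

lemma BC_map:
  assumes fA: "finite A" and sA: "set_pmf p \<subseteq> A" "set_pmf q \<subseteq> A"
    and fB: "finite B" and sB: "g ` A \<subseteq> B"
  shows "BC B (map_pmf g p) (map_pmf g q) \<ge> (\<Sum>x\<in>A. sqrt (pmf p x * pmf q x))"
proof -
  have "BC B (map_pmf g p) (map_pmf g q) = BC B (bind_pmf p (\<lambda>x. return_pmf (g x))) (bind_pmf q (\<lambda>x. return_pmf (g x)))"
    by (simp add: map_pmf_def)
  also have "\<dots> \<ge> (\<Sum>x\<in>A. sqrt (pmf p x * pmf q x) * BC B (return_pmf (g x)) (return_pmf (g x)))"
    using assms by (intro BC_bind) auto
  finally show ?thesis using sB fB by (simp add: BC_return image_subset_iff)
qed

lemma TV_BC:
  assumes fS: "finite S" and sS: "set_pmf p \<subseteq> S" "set_pmf q \<subseteq> S"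
    and f01: "\<And>x. 0 \<le> f x \<and> f x \<le> 1"
  shows "\<bar>measure_pmf.expectation p f - measure_pmf.expectation q f\<bar> \<le> sqrt (2 - 2 * BC S p q)"
proof -
  define u where "u x = sqrt (pmf p x)" for x
  define v where "v x = sqrt (pmf q x)" for x
  have p1: "(\<Sum>x\<in>S. pmf p x) = 1" "(\<Sum>x\<in>S. pmf q x) = 1" using sum_pmf_eq_1 assms by auto
  have up: "(u x)\<^sup>2 = pmf p x" "(v x)\<^sup>2 = pmf q x" for x by (auto simp: u_def v_def)
  have bc: "BC S p q = (\<Sum>x\<in>S. u x * v x)" unfolding BC_def u_def v_def by (simp add: real_sqrt_mult)
  have d1: "(\<Sum>x\<in>S. (u x - v x)\<^sup>2) = 2 - 2 * BC S p q"
  proof -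
    have e1: "\<And>x. (u x - v x)\<^sup>2 = (pmf p x + pmf q x) - 2 * (u x * v x)" by (simp add: power2_diff up)
    have "(\<Sum>x\<in>S. (u x - v x)\<^sup>2) = ((\<Sum>x\<in>S. pmf p x) + (\<Sum>x\<in>S. pmf q x)) - 2 * (\<Sum>x\<in>S. u x * v x)"
      by (simp only: e1 sum.distrib sum_subtractf sum_distrib_left)
    thus ?thesis using p1 bc by simp
  qed
  have d2: "(\<Sum>x\<in>S. (u x + v x)\<^sup>2) = 2 + 2 * BC S p q"
  proof -
    have e1: "\<And>x. (u x + v x)\<^sup>2 = (pmf p x + pmf q x) + 2 * (u x * v x)" by (simp add: power2_sum up)
    have "(\<Sum>x\<in>S. (u x + v x)\<^sup>2) = ((\<Sum>x\<in>S. pmf p x) + (\<Sum>x\<in>S. pmf q x)) + 2 * (\<Sum>x\<in>S. u x * v x)"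
      by (simp only: e1 sum.distrib sum_distrib_left)
    thus ?thesis using p1 bc by simp
  qed
  have "measure_pmf.expectation p f - measure_pmf.expectation q f
      = (\<Sum>x\<in>S. (pmf p x - pmf q x) * (f x - 1/2))"
  proof -
    have e0: "\<And>x. (pmf p x - pmf q x) * (f x - 1/2) = (pmf p x * f x - pmf q x * f x) - (pmf p x - pmf q x) / 2"
      by (simp add: field_simps)
    have "(\<Sum>x\<in>S. (pmf p x - pmf q x) * (f x - 1/2))
        = ((\<Sum>x\<in>S. pmf p x * f x) - (\<Sum>x\<in>S. pmf q x * f x)) - ((\<Sum>x\<in>S. pmf p x) - (\<Sum>x\<in>S. pmf q x)) / 2"
      by (simp only: e0 sum_subtractf sum_divide_distrib[symmetric])
    thus ?thesis using p1 by (simp add: E_sum[OF fS sS(1)] E_sum[OF fS sS(2)])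
  qed
  also have "\<bar>\<dots>\<bar> \<le> (\<Sum>x\<in>S. \<bar>(u x - v x)\<bar> * ((u x + v x) / 2))"
  proof -
    have "\<bar>\<Sum>x\<in>S. (pmf p x - pmf q x) * (f x - 1/2)\<bar> \<le> (\<Sum>x\<in>S. \<bar>(pmf p x - pmf q x) * (f x - 1/2)\<bar>)"
      by (rule sum_abs)
    also have "\<dots> \<le> (\<Sum>x\<in>S. \<bar>(u x - v x)\<bar> * ((u x + v x) / 2))"
    proof (intro sum_mono)
      fix x
      have h: "\<bar>f x - 1/2\<bar> \<le> 1/2" using f01[of x] by (cases "f x \<ge> 1/2") (auto simp: abs_if)
      have e: "pmf p x - pmf q x = (u x - v x) * (u x + v x)" using up[of x] by (simp add: power2_eq_square algebra_simps)
      have z: "0 \<le> u x + v x" by (simp add: u_def v_def)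
      have "\<bar>(pmf p x - pmf q x) * (f x - 1/2)\<bar> = (\<bar>u x - v x\<bar> * (u x + v x)) * \<bar>f x - 1/2\<bar>"
        using z by (simp add: e abs_mult)
      also have "\<dots> \<le> (\<bar>u x - v x\<bar> * (u x + v x)) * (1/2)"
        using z h by (intro mult_left_mono) auto
      finally show "\<bar>(pmf p x - pmf q x) * (f x - 1/2)\<bar> \<le> \<bar>u x - v x\<bar> * ((u x + v x) / 2)" by simp
    qed
    finally show ?thesis .
  qed
  also have "\<dots> = (1/2) * (\<Sum>x\<in>S. \<bar>u x - v x\<bar> * (u x + v x))"
    by (simp add: sum_distrib_left)
  also have "\<dots> \<le> (1/2) * sqrt ((\<Sum>x\<in>S. (u x - v x)\<^sup>2) * (\<Sum>x\<in>S. (u x + v x)\<^sup>2))"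
  proof -
    have "(\<Sum>x\<in>S. \<bar>u x - v x\<bar> * (u x + v x))\<^sup>2 \<le> (\<Sum>x\<in>S. (\<bar>u x - v x\<bar>)\<^sup>2) * (\<Sum>x\<in>S. (u x + v x)\<^sup>2)"
      by (rule Cauchy_Schwarz_ineq_sum)
    hence "(\<Sum>x\<in>S. \<bar>u x - v x\<bar> * (u x + v x)) \<le> sqrt ((\<Sum>x\<in>S. (u x - v x)\<^sup>2) * (\<Sum>x\<in>S. (u x + v x)\<^sup>2))"
      using real_le_rsqrt by simp
    thus ?thesis by simp
  qed
  also have "\<dots> = 1/2 * sqrt ((2 - 2 * BC S p q) * (2 + 2 * BC S p q))" by (simp only: d1 d2)
  finally have main: "\<bar>measure_pmf.expectation p f - measure_pmf.expectation q f\<bar>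
      \<le> 1/2 * sqrt ((2 - 2 * BC S p q) * (2 + 2 * BC S p q))" .
  have nn: "0 \<le> 2 - 2 * BC S p q"
    unfolding d1[symmetric] by (intro sum_nonneg) simp
  have bc0: "0 \<le> BC S p q" unfolding BC_def by (auto intro: sum_nonneg)
  have "sqrt ((2 - 2 * BC S p q) * (2 + 2 * BC S p q)) \<le> sqrt ((2 - 2 * BC S p q) * 4)"
    using nn bc0 by (intro real_sqrt_le_mono mult_left_mono) auto
  also have "\<dots> = 2 * sqrt (2 - 2 * BC S p q)"
  proof -
    have s4: "sqrt (4::real) = 2" using real_sqrt_abs[of "2::real"] by simp
    show ?thesis by (simp only: real_sqrt_mult s4 mult.commute)
  qed
  finally show ?thesis using main by simp
qed




lemma hist_local:
  assumes "\<And>s. 1 \<le> s \<Longrightarrow> s \<le> t \<Longrightarrow> l s = l' s"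
  shows "hist_pmf E P l t = hist_pmf E P l' t"
  using assms by (induction t) auto

lemma hist_length: "h \<in> set_pmf (hist_pmf E P l t) \<Longrightarrow> length h = t"
  by (induction t arbitrary: h) (auto simp: set_bind_pmf)

lemma finite_hist:
  fixes P :: "('v::finite) player"
  shows "finite (set_pmf (hist_pmf E P l t))"
  by (induction t) (auto simp: set_bind_pmf intro!: finite_imageI)

lemma commute_map_pmf:
  "bind_pmf A (\<lambda>y. map_pmf (\<lambda>i. G i y) B) = bind_pmf B (\<lambda>i. map_pmf (\<lambda>y. G i y) A)"
  unfolding map_pmf_def by (rule bind_commute_pmf)

locale lb =
  fixes E :: "('v::finite \<times> 'v) set" and P :: "'v player" and a b :: 'v
  assumes ab: "a \<noteq> b" and naa: "(a,a) \<notin> E" and nba: "(b,a) \<notin> E"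
begin

definition lc :: "bool \<Rightarrow> 'v \<Rightarrow> real" where
  "lc y v = (if v = a then (if y then 1 else 0) else if v = b then 1/2 else 1)"

definition lx :: "(nat \<Rightarrow> bool) \<Rightarrow> nat \<Rightarrow> 'v \<Rightarrow> real" where
  "lx x t = lc (x t)"

primrec X :: "real \<Rightarrow> nat \<Rightarrow> (nat \<Rightarrow> bool) pmf" where
  "X q 0 = return_pmf (\<lambda>_. False)"
| "X q (Suc t) = bind_pmf (X q t) (\<lambda>f. map_pmf (\<lambda>y. f(Suc t := y)) (bernoulli_pmf q))"

definition K :: "real \<Rightarrow> nat \<Rightarrow> ((nat \<Rightarrow> bool) \<times> 'v history) pmf" where
  "K q t = bind_pmf (X q t) (\<lambda>x. map_pmf (\<lambda>h. (x, h)) (hist_pmf E P (lx x) t))"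

definition ext :: "'v history \<Rightarrow> 'v \<Rightarrow> bool \<Rightarrow> 'v history" where
  "ext h i y = h @ [(i, feedback E i (lc y))]"

definition kern :: "real \<Rightarrow> 'v history \<Rightarrow> 'v history pmf" where
  "kern q h = bind_pmf (P h) (\<lambda>i. map_pmf (\<lambda>y. ext h i y) (bernoulli_pmf q))"

primrec M :: "real \<Rightarrow> nat \<Rightarrow> 'v history pmf" where
  "M q 0 = return_pmf []"
| "M q (Suc t) = bind_pmf (M q t) (kern q)"

lemma K_Suc:
  "K q (Suc t) = bind_pmf (K q t) (\<lambda>(f,h). bind_pmf (P h)
      (\<lambda>i. map_pmf (\<lambda>y. (f(Suc t := y), ext h i y)) (bernoulli_pmf q)))"
proof -
  have ht: "hist_pmf E P (lx (f(Suc t := y))) t = hist_pmf E P (lx f) t" for f y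
    by (rule hist_local) (auto simp: lx_def)
  have lu: "lx (f(Suc t := y)) (Suc t) = lc y" for f y by (simp add: lx_def)
  have "K q (Suc t) = bind_pmf (X q t) (\<lambda>f. bind_pmf (bernoulli_pmf q) (\<lambda>y.
      bind_pmf (hist_pmf E P (lx f) t) (\<lambda>h. map_pmf (\<lambda>i. (f(Suc t := y), ext h i y)) (P h))))"
    unfolding K_def by (simp add: bind_assoc_pmf bind_map_pmf map_bind_pmf map_pmf_comp ht lu ext_def)
  also have "\<dots> = bind_pmf (X q t) (\<lambda>f. bind_pmf (hist_pmf E P (lx f) t) (\<lambda>h.
      bind_pmf (bernoulli_pmf q) (\<lambda>y. map_pmf (\<lambda>i. (f(Suc t := y), ext h i y)) (P h))))"
    by (subst bind_commute_pmf) simp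
  also have "\<dots> = bind_pmf (X q t) (\<lambda>f. bind_pmf (hist_pmf E P (lx f) t) (\<lambda>h.
      bind_pmf (P h) (\<lambda>i. map_pmf (\<lambda>y. (f(Suc t := y), ext h i y)) (bernoulli_pmf q))))"
    by (subst commute_map_pmf) simp
  also have "\<dots> = bind_pmf (K q t) (\<lambda>(f,h). bind_pmf (P h)
      (\<lambda>i. map_pmf (\<lambda>y. (f(Suc t := y), ext h i y)) (bernoulli_pmf q)))"
    unfolding K_def by (simp add: bind_assoc_pmf bind_map_pmf)
  finally show ?thesis .
qed

lemma M_eq: "map_pmf snd (K q t) = M q t"
proof (induction t)
  case 0
  show ?case by (simp add: K_def bind_return_pmf)
next
  case (Suc t)
  have "map_pmf snd (K q (Suc t)) = bind_pmf (K q t) (\<lambda>p. kern q (snd p))"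
    by (simp add: K_Suc map_bind_pmf map_pmf_comp kern_def case_prod_beta)
  also have "\<dots> = bind_pmf (map_pmf snd (K q t)) (kern q)" by (simp add: bind_map_pmf)
  finally show ?case using Suc by simp
qed

lemma finite_X: "finite (set_pmf (X q t))"
  by (induction t) (auto simp: set_bind_pmf)

lemma finite_K: "finite (set_pmf (K q t))"
  unfolding K_def using finite_X finite_hist by (auto simp: set_bind_pmf intro!: finite_imageI)

lemma finite_M: "finite (set_pmf (M q t))"
  using finite_K[of q t] by (simp flip: M_eq)

lemma finite_kern: "finite (set_pmf (kern q h))"
  unfolding kern_def by (auto simp: set_bind_pmf)

lemma K_length: "p \<in> set_pmf (K q t) \<Longrightarrow> length (snd p) = t"
  unfolding K_def by (auto simp: set_bind_pmf hist_length)

lemma cum_step: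
  assumes "length h = t"
  shows "cum_loss (lx (f(Suc t := y))) (ext h i y) = cum_loss (lx f) h + lc y i"
  using assms by (simp add: cum_loss_def ext_def lx_def nth_append)

end



lemma E_cong:
  fixes f g :: "'a \<Rightarrow> real"
  assumes "finite (set_pmf p)" "\<And>x. x \<in> set_pmf p \<Longrightarrow> f x = g x"
  shows "measure_pmf.expectation p f = measure_pmf.expectation p g"
  using assms by (simp add: E_sum[OF assms(1)])

lemma E_add:
  fixes f g :: "'a \<Rightarrow> real"
  assumes "finite (set_pmf p)"
  shows "measure_pmf.expectation p (\<lambda>x. f x + g x) = measure_pmf.expectation p f + measure_pmf.expectation p g"
  by (simp add: E_sum[OF assms] algebra_simps sum.distrib)

lemma E_diff:
  fixes f g :: "'a \<Rightarrow> real"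
  assumes "finite (set_pmf p)"
  shows "measure_pmf.expectation p (\<lambda>x. f x - g x) = measure_pmf.expectation p f - measure_pmf.expectation p g"
  by (simp add: E_sum[OF assms] algebra_simps sum_subtractf)

lemma E_mono:
  fixes f g :: "'a \<Rightarrow> real"
  assumes "finite (set_pmf p)" "\<And>x. x \<in> set_pmf p \<Longrightarrow> f x \<le> g x"
  shows "measure_pmf.expectation p f \<le> measure_pmf.expectation p g"
  using assms by (simp add: E_sum[OF assms(1)] sum_mono mult_left_mono)

lemma E_const:
  fixes c :: real
  assumes "finite (set_pmf p)"
  shows "measure_pmf.expectation p (\<lambda>x. c) = c"
  by simp

lemma E_exists_ge:
  fixes f :: "'a \<Rightarrow> real"
  assumes "finite (set_pmf p)"
  shows "\<exists>x\<in>set_pmf p. measure_pmf.expectation p f \<le> f x"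
proof (rule ccontr)
  assume "\<not> ?thesis"
  hence lt: "\<And>x. x \<in> set_pmf p \<Longrightarrow> f x < measure_pmf.expectation p f" by auto
  have ne: "set_pmf p \<noteq> {}" by (simp add: set_pmf_not_empty)
  have "measure_pmf.expectation p f = (\<Sum>x\<in>set_pmf p. pmf p x * f x)" by (rule E_sum[OF assms]) simp
  also have "\<dots> < (\<Sum>x\<in>set_pmf p. pmf p x * measure_pmf.expectation p f)"
    using assms ne lt by (intro sum_strict_mono) (auto simp: set_pmf_iff intro!: mult_strict_left_mono pmf_pos)
  also have "\<dots> = measure_pmf.expectation p f"
    using sum_pmf_eq_1[OF assms] by (simp add: sum_distrib_right[symmetric])
  finally show False by simp
qed

lemma E_bool:
  fixes f :: "bool \<Rightarrow> real"
  assumes "0 \<le> q" "q \<le> 1"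
  shows "measure_pmf.expectation (bernoulli_pmf q) f = q * f True + (1 - q) * f False"
proof -
  have "measure_pmf.expectation (bernoulli_pmf q) f = (\<Sum>y\<in>UNIV. pmf (bernoulli_pmf q) y * f y)"
    by (rule E_sum) auto
  also have "\<dots> = q * f True + (1 - q) * f False"
    using assms by (simp add: UNIV_bool)
  finally show ?thesis .
qed

context lb begin

definition mu :: "real \<Rightarrow> 'v \<Rightarrow> real" where
  "mu q v = (if v = a then q else if v = b then 1/2 else 1)"

definition rho :: "real \<Rightarrow> 'v history \<Rightarrow> real" where
  "rho q h = (\<Sum>i\<in>UNIV. pmf (P h) i * mu q i)"

lemma E_lc: "0 \<le> q \<Longrightarrow> q \<le> 1 \<Longrightarrow> measure_pmf.expectation (bernoulli_pmf q) (\<lambda>y. lc y v) = mu q v"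
  by (simp add: E_bool lc_def mu_def field_simps)

lemma E_lc': "0 \<le> q \<Longrightarrow> q \<le> 1 \<Longrightarrow> measure_pmf.expectation (bernoulli_pmf q) (\<lambda>y. c + lc y v) = c + mu q v"
  by (simp add: E_bool lc_def mu_def field_simps)

definition Ecum :: "real \<Rightarrow> nat \<Rightarrow> real" where
  "Ecum q t = measure_pmf.expectation (K q t) (\<lambda>(x,h). cum_loss (lx x) h)"

lemma Ecum_Suc:
  assumes q: "0 \<le> q" "q \<le> 1"
  shows "Ecum q (Suc t) = Ecum q t + measure_pmf.expectation (M q t) (rho q)"
proof -
  have "Ecum q (Suc t) = measure_pmf.expectation (K q t) (\<lambda>p. measure_pmf.expectation (P (snd p))
      (\<lambda>i. measure_pmf.expectation (bernoulli_pmf q) (\<lambda>y. cum_loss (lx ((fst p)(Suc t := y))) (ext (snd p) i y))))"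
    unfolding Ecum_def K_Suc
    by (subst E_bind[OF finite_K]) (auto simp: case_prod_beta E_bind finite_set_bind intro!: finite_set_bind)
  also have "\<dots> = measure_pmf.expectation (K q t) (\<lambda>p. cum_loss (lx (fst p)) (snd p) + rho q (snd p))"
  proof (rule E_cong[OF finite_K])
    fix p assume "p \<in> set_pmf (K q t)"
    hence len: "length (snd p) = t" by (rule K_length)
    have "measure_pmf.expectation (P (snd p))
      (\<lambda>i. measure_pmf.expectation (bernoulli_pmf q) (\<lambda>y. cum_loss (lx ((fst p)(Suc t := y))) (ext (snd p) i y)))
      = measure_pmf.expectation (P (snd p)) (\<lambda>i. cum_loss (lx (fst p)) (snd p) + mu q i)"
      using q by (simp only: cum_step[OF len] E_lc')
    also have "\<dots> = cum_loss (lx (fst p)) (snd p) + rho q (snd p)"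
      by (simp add: E_add rho_def E_sum[of UNIV])
    finally show "measure_pmf.expectation (P (snd p))
      (\<lambda>i. measure_pmf.expectation (bernoulli_pmf q) (\<lambda>y. cum_loss (lx ((fst p)(Suc t := y))) (ext (snd p) i y)))
      = cum_loss (lx (fst p)) (snd p) + rho q (snd p)" .
  qed
  also have "\<dots> = Ecum q t + measure_pmf.expectation (M q t) (rho q)"
    unfolding Ecum_def by (simp add: E_add[OF finite_K] split_def flip: M_eq)
  finally show ?thesis .
qed

lemma Ecum_sum: "0 \<le> q \<Longrightarrow> q \<le> 1 \<Longrightarrow> Ecum q T = (\<Sum>s<T. measure_pmf.expectation (M q s) (rho q))"
  by (induction T) (auto simp: Ecum_Suc, simp add: Ecum_def K_def cum_loss_def bind_return_pmf)

lemma EX_sum: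
  assumes q: "0 \<le> q" "q \<le> 1"
  shows "measure_pmf.expectation (X q t) (\<lambda>x. \<Sum>s=1..t. lx x s v) = real t * mu q v"
proof (induction t)
  case 0 show ?case by simp
next
  case (Suc t)
  have "measure_pmf.expectation (X q (Suc t)) (\<lambda>x. \<Sum>s=1..Suc t. lx x s v)
    = measure_pmf.expectation (X q t) (\<lambda>f. measure_pmf.expectation (bernoulli_pmf q)
        (\<lambda>y. \<Sum>s=1..Suc t. lx (f(Suc t := y)) s v))"
    by (simp add: E_bind finite_X)
  also have "\<dots> = measure_pmf.expectation (X q t) (\<lambda>f. (\<Sum>s=1..t. lx f s v) + mu q v)"
  proof (rule E_cong[OF finite_X])
    fix f
    have hs: "(\<Sum>s=1..Suc t. lx (f(Suc t := y)) s v) = (\<Sum>s=1..t. lx f s v) + lc y v" for y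
      by (simp add: sum.atLeast1_atMost_eq lx_def)
    thus "measure_pmf.expectation (bernoulli_pmf q) (\<lambda>y. \<Sum>s=1..Suc t. lx (f(Suc t := y)) s v)
        = (\<Sum>s=1..t. lx f s v) + mu q v"
      by (simp only: hs E_lc'[OF q])
  qed
  also have "\<dots> = real (Suc t) * mu q v" using Suc by (simp add: E_add[OF finite_X] algebra_simps)
  finally show ?case .
qed

lemma avg_regret:
  assumes q: "0 \<le> q" "q \<le> 1"
  shows "measure_pmf.expectation (X q T) (\<lambda>x. expected_regret E P (lx x) T) \<ge> Ecum q T - real T * mu q v"
proof -
  have "measure_pmf.expectation (X q T) (\<lambda>x. expected_regret E P (lx x) T)
     \<ge> measure_pmf.expectation (X q T) (\<lambda>x. measure_pmf.expectation (hist_pmf E P (lx x) T) (cum_loss (lx x))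
          - (\<Sum>s=1..T. lx x s v))"
  proof (rule E_mono[OF finite_X])
    fix x
    have "(MIN i. \<Sum>t=1..T. lx x t i) \<le> (\<Sum>t=1..T. lx x t v)" by (rule Min_le) auto
    thus "measure_pmf.expectation (hist_pmf E P (lx x) T) (cum_loss (lx x)) - (\<Sum>s=1..T. lx x s v)
       \<le> expected_regret E P (lx x) T" unfolding expected_regret_def by simp
  qed
  also have "measure_pmf.expectation (X q T) (\<lambda>x. measure_pmf.expectation (hist_pmf E P (lx x) T) (cum_loss (lx x))
          - (\<Sum>s=1..T. lx x s v)) = Ecum q T - real T * mu q v"
  proof -
    have "Ecum q T = measure_pmf.expectation (X q T) (\<lambda>x. measure_pmf.expectation (hist_pmf E P (lx x) T) (cum_loss (lx x)))"
      unfolding Ecum_def K_def by (subst E_bind) (auto simp: finite_X finite_hist)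
    thus ?thesis using EX_sum[OF q, of T v] by (simp add: E_diff[OF finite_X])
  qed
  finally show ?thesis .
qed

end



context lb begin

definition cb :: "real \<Rightarrow> real \<Rightarrow> real" where
  "cb q1 q2 = (\<Sum>y\<in>UNIV. sqrt (pmf (bernoulli_pmf q1) y * pmf (bernoulli_pmf q2) y))"

definition pi :: "'v history \<Rightarrow> real" where
  "pi h = (\<Sum>i\<in>N_in E a. pmf (P h) i)"

lemma cb_le1: "cb q1 q2 \<le> 1"
proof -
  have "cb q1 q2 \<le> sqrt ((\<Sum>y\<in>UNIV. pmf (bernoulli_pmf q1) y) * (\<Sum>y\<in>UNIV. pmf (bernoulli_pmf q2) y))"
    unfolding cb_def by (rule sqrt_sum_ge) auto
  also have "\<dots> = 1" by (simp add: sum_pmf_eq_1)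
  finally show ?thesis .
qed

lemma pi_nonneg: "0 \<le> pi h" unfolding pi_def by (auto intro: sum_nonneg)

lemma fb_indep:
  assumes "i \<notin> N_in E a"
  shows "ext h i y = ext h i True"
proof -
  have "feedback E i (lc y) = feedback E i (lc True)"
  proof
    fix j
    show "feedback E i (lc y) j = feedback E i (lc True) j"
      using assms by (cases "j = a") (auto simp: feedback_def N_out_def N_in_def lc_def)
  qed
  thus ?thesis by (simp add: ext_def)
qed

lemma kern_BC:
  assumes fB: "finite B" and sB: "\<And>i y. ext h i y \<in> B"
  shows "BC B (kern q1 h) (kern q2 h) \<ge> 1 - (1 - cb q1 q2) * pi h"
proof -
  let ?c = "\<lambda>i. if i \<in> N_in E a then cb q1 q2 else 1"
  have "(\<Sum>i\<in>UNIV. sqrt (pmf (P h) i * pmf (P h) i) *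
      BC B (map_pmf (ext h i) (bernoulli_pmf q1)) (map_pmf (ext h i) (bernoulli_pmf q2)))
      \<le> BC B (kern q1 h) (kern q2 h)"
    unfolding kern_def using sB fB
    by (intro BC_bind[where A=UNIV]) auto
  moreover have "(\<Sum>i\<in>UNIV. pmf (P h) i * ?c i) \<le> (\<Sum>i\<in>UNIV. sqrt (pmf (P h) i * pmf (P h) i) *
      BC B (map_pmf (ext h i) (bernoulli_pmf q1)) (map_pmf (ext h i) (bernoulli_pmf q2)))"
  proof (intro sum_mono)
    fix i
    have "?c i \<le> BC B (map_pmf (ext h i) (bernoulli_pmf q1)) (map_pmf (ext h i) (bernoulli_pmf q2))"
    proof (cases "i \<in> N_in E a")
      case True
      have "BC B (map_pmf (ext h i) (bernoulli_pmf q1)) (map_pmf (ext h i) (bernoulli_pmf q2)) \<ge> cb q1 q2"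
        unfolding cb_def by (rule BC_map) (auto simp: fB sB)
      thus ?thesis using True by simp
    next
      case False
      have "map_pmf (ext h i) p = return_pmf (ext h i True)" for p
      proof -
        have "map_pmf (ext h i) p = map_pmf (\<lambda>_. ext h i True) p"
          by (rule map_pmf_cong) (auto intro: fb_indep[OF False])
        thus ?thesis by simp
      qed
      thus ?thesis using False BC_return[OF fB sB] by simp
    qed
    thus "pmf (P h) i * ?c i \<le> sqrt (pmf (P h) i * pmf (P h) i) *
      BC B (map_pmf (ext h i) (bernoulli_pmf q1)) (map_pmf (ext h i) (bernoulli_pmf q2))"
      by (simp add: mult_left_mono)
  qed
  moreover have "(\<Sum>i\<in>UNIV. pmf (P h) i * ?c i) = 1 - (1 - cb q1 q2) * pi h"
  proof -
    have "(\<Sum>i\<in>UNIV. pmf (P h) i * ?c i) = (\<Sum>i\<in>UNIV. pmf (P h) i - (1 - cb q1 q2) * (if i \<in> N_in E a then pmf (P h) i else 0))"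
      by (intro sum.cong) (auto simp: algebra_simps)
    also have "\<dots> = (\<Sum>i\<in>UNIV. pmf (P h) i) - (1 - cb q1 q2) * (\<Sum>i\<in>UNIV. (if i \<in> N_in E a then pmf (P h) i else 0))"
      by (simp add: sum_subtractf sum_distrib_left)
    also have "\<dots> = 1 - (1 - cb q1 q2) * pi h"
      by (simp add: sum_pmf_eq_1 pi_def sum.inter_restrict[symmetric])
    finally show ?thesis .
  qed
  ultimately show ?thesis by linarith
qed

definition SS :: "real \<Rightarrow> real \<Rightarrow> nat \<Rightarrow> 'v history set" where
  "SS q1 q2 t = set_pmf (M q1 t) \<union> set_pmf (M q2 t)"

definition BCt :: "real \<Rightarrow> real \<Rightarrow> nat \<Rightarrow> real" where
  "BCt q1 q2 t = BC (SS q1 q2 t) (M q1 t) (M q2 t)"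

lemma finite_SS: "finite (SS q1 q2 t)" by (simp add: SS_def finite_M)

lemma BCt_Suc:
  "BCt q1 q2 (Suc t) \<ge> BCt q1 q2 t - (1 - cb q1 q2) / 2 *
     (measure_pmf.expectation (M q1 t) pi + measure_pmf.expectation (M q2 t) pi)"
proof -
  let ?A = "SS q1 q2 t"
  define B where "B = (\<lambda>(h,i,y). ext h i y) ` (?A \<times> UNIV)"
  have fA: "finite ?A" by (rule finite_SS)
  have fB: "finite B" unfolding B_def using fA by auto
  have extB: "h \<in> ?A \<Longrightarrow> ext h i y \<in> B" for h i y unfolding B_def
    by (rule image_eqI[where x="(h,i,y)"]) auto
  have skern: "h \<in> ?A \<Longrightarrow> set_pmf (kern q h) \<subseteq> B" for h q
    unfolding kern_def by (auto simp: set_bind_pmf extB)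
  let ?p = "\<lambda>h. pmf (M q1 t) h" and ?q = "\<lambda>h. pmf (M q2 t) h"
  have f1: "BC B (M q1 (Suc t)) (M q2 (Suc t)) \<ge> (\<Sum>h\<in>?A. sqrt (?p h * ?q h) * BC B (kern q1 h) (kern q2 h))"
    using fA fB skern by (simp, intro BC_bind) (auto simp: SS_def)
  have f2: "(\<Sum>h\<in>?A. sqrt (?p h * ?q h) * BC B (kern q1 h) (kern q2 h))
     \<ge> (\<Sum>h\<in>?A. sqrt (?p h * ?q h) * (1 - (1 - cb q1 q2) * pi h))"
    by (intro sum_mono mult_left_mono kern_BC fB extB) auto
  have f3: "(\<Sum>h\<in>?A. sqrt (?p h * ?q h) * (1 - (1 - cb q1 q2) * pi h))
     = BCt q1 q2 t - (1 - cb q1 q2) * (\<Sum>h\<in>?A. sqrt (?p h * ?q h) * pi h)"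
  proof -
    have e: "\<And>h. sqrt (?p h * ?q h) * (1 - (1 - cb q1 q2) * pi h) = sqrt (?p h * ?q h) - (1 - cb q1 q2) * (sqrt (?p h * ?q h) * pi h)"
      by (simp add: algebra_simps)
    show ?thesis unfolding BCt_def BC_def by (simp only: e sum_subtractf sum_distrib_left)
  qed
  have f4: "(\<Sum>h\<in>?A. sqrt (?p h * ?q h) * pi h) \<le> (\<Sum>h\<in>?A. (?p h + ?q h) / 2 * pi h)"
    by (intro sum_mono mult_right_mono arith_geo_mean_sqrt pi_nonneg) auto
  have f5: "(\<Sum>h\<in>?A. (?p h + ?q h) / 2 * pi h)
      = (measure_pmf.expectation (M q1 t) pi + measure_pmf.expectation (M q2 t) pi) / 2"
  proof -
    have e: "\<And>h. (?p h + ?q h) / 2 * pi h = (?p h * pi h + ?q h * pi h) / 2" by (simp add: field_simps)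
    have "(\<Sum>h\<in>?A. (?p h + ?q h) / 2 * pi h) = ((\<Sum>h\<in>?A. ?p h * pi h) + (\<Sum>h\<in>?A. ?q h * pi h)) / 2"
      by (simp only: e sum.distrib sum_divide_distrib[symmetric])
    moreover have "measure_pmf.expectation (M q1 t) pi = (\<Sum>h\<in>?A. ?p h * pi h)"
      using fA by (rule E_sum) (auto simp: SS_def)
    moreover have "measure_pmf.expectation (M q2 t) pi = (\<Sum>h\<in>?A. ?q h * pi h)"
      using fA by (rule E_sum) (auto simp: SS_def)
    ultimately show ?thesis by simp
  qed
  have f6: "BC B (M q1 (Suc t)) (M q2 (Suc t)) = BCt q1 q2 (Suc t)"
    unfolding BCt_def
  proof (rule BC_superset[OF fB finite_SS])
    show "set_pmf (M q1 (Suc t)) \<subseteq> B" using skern by (auto simp: set_bind_pmf SS_def)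
    show "set_pmf (M q1 (Suc t)) \<subseteq> SS q1 q2 (Suc t)" by (auto simp: SS_def)
  qed
  have c0: "0 \<le> 1 - cb q1 q2" using cb_le1 by simp
  have f7: "(1 - cb q1 q2) * (\<Sum>h\<in>?A. sqrt (?p h * ?q h) * pi h) \<le> (1 - cb q1 q2) * (\<Sum>h\<in>?A. (?p h + ?q h) / 2 * pi h)"
    using f4 c0 by (rule mult_left_mono)
  have f8: "(1 - cb q1 q2) / 2 * (measure_pmf.expectation (M q1 t) pi + measure_pmf.expectation (M q2 t) pi)
     = (1 - cb q1 q2) * (\<Sum>h\<in>?A. (?p h + ?q h) / 2 * pi h)" using f5 by simp
  show ?thesis using f1 f2 f3 f6 f7 f8 by linarith
qed

lemma BCt_bound:
  "1 - BCt q1 q2 t \<le> (1 - cb q1 q2) / 2 *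
     (\<Sum>s<t. measure_pmf.expectation (M q1 s) pi + measure_pmf.expectation (M q2 s) pi)"
proof (induction t)
  case 0
  show ?case by (simp add: BCt_def SS_def BC_def)
next
  case (Suc t)
  let ?F = "\<lambda>s. measure_pmf.expectation (M q1 s) pi + measure_pmf.expectation (M q2 s) pi"
  have "(1 - cb q1 q2) / 2 * (\<Sum>s<Suc t. ?F s) = (1 - cb q1 q2) / 2 * (\<Sum>s<t. ?F s) + (1 - cb q1 q2) / 2 * ?F t"
    by (simp add: distrib_left)
  thus ?case using Suc.IH BCt_Suc[of q1 q2 t] by linarith
qed

end



context lb begin

lemma lin_sum:
  "(\<Sum>i\<in>UNIV. pmf (P h) i * (\<alpha> + \<beta> * (if i = a then 1 else 0) + \<gamma> * (if i \<in> N_in E a then 1 else 0)))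
   = \<alpha> + \<beta> * pmf (P h) a + \<gamma> * pi h"
proof -
  have e: "\<And>i. pmf (P h) i * (\<alpha> + \<beta> * (if i = a then 1 else 0) + \<gamma> * (if i \<in> N_in E a then 1 else 0))
     = \<alpha> * pmf (P h) i + \<beta> * (if i = a then pmf (P h) i else 0) + \<gamma> * (if i \<in> N_in E a then pmf (P h) i else 0)"
    by (simp add: algebra_simps)
  have "(\<Sum>i\<in>UNIV. pmf (P h) i * (\<alpha> + \<beta> * (if i = a then 1 else 0) + \<gamma> * (if i \<in> N_in E a then 1 else 0)))
    = \<alpha> * (\<Sum>i\<in>UNIV. pmf (P h) i) + \<beta> * (\<Sum>i\<in>UNIV. if i = a then pmf (P h) i else 0)
      + \<gamma> * (\<Sum>i\<in>UNIV. if i \<in> N_in E a then pmf (P h) i else 0)"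
    by (simp only: e sum.distrib sum_distrib_left)
  also have "\<dots> = \<alpha> + \<beta> * pmf (P h) a + \<gamma> * pi h"
    by (simp add: sum_pmf_eq_1 pi_def sum.inter_restrict[symmetric])
  finally show ?thesis .
qed

lemma E_lin3:
  fixes f g :: "'a \<Rightarrow> real"
  assumes "finite (set_pmf p)"
  shows "measure_pmf.expectation p (\<lambda>x. \<alpha> + \<beta> * f x + \<gamma> * g x)
     = \<alpha> + \<beta> * measure_pmf.expectation p f + \<gamma> * measure_pmf.expectation p g"
proof -
  have e: "\<And>x. pmf p x * (\<alpha> + \<beta> * f x + \<gamma> * g x) = \<alpha> * pmf p x + \<beta> * (pmf p x * f x) + \<gamma> * (pmf p x * g x)"
    by (simp add: algebra_simps)
  have "(\<Sum>x\<in>set_pmf p. pmf p x * (\<alpha> + \<beta> * f x + \<gamma> * g x))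
     = \<alpha> * (\<Sum>x\<in>set_pmf p. pmf p x) + \<beta> * (\<Sum>x\<in>set_pmf p. pmf p x * f x) + \<gamma> * (\<Sum>x\<in>set_pmf p. pmf p x * g x)"
    by (simp only: e sum.distrib sum_distrib_left)
  thus ?thesis using assms by (simp add: E_sum[OF assms] sum_pmf_eq_1)
qed

lemma aN: "a \<notin> N_in E a" and bN: "b \<notin> N_in E a"
  using naa nba by (auto simp: N_in_def)

lemma rho_lower:
  fixes \<alpha> \<beta> \<gamma> :: real
  assumes "\<And>i. mu q i - c \<ge> \<alpha> + \<beta> * (if i = a then 1 else 0) + \<gamma> * (if i \<in> N_in E a then 1 else 0)"
  shows "rho q h - c \<ge> \<alpha> + \<beta> * pmf (P h) a + \<gamma> * pi h"
proof -
  have "rho q h - c = (\<Sum>i\<in>UNIV. pmf (P h) i * (mu q i - c))"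
  proof -
    have "(\<Sum>i\<in>UNIV. pmf (P h) i * (mu q i - c)) = (\<Sum>i\<in>UNIV. pmf (P h) i * mu q i) - c * (\<Sum>i\<in>UNIV. pmf (P h) i)"
      by (simp add: algebra_simps sum_subtractf sum_distrib_left)
    thus ?thesis by (simp add: rho_def sum_pmf_eq_1)
  qed
  also have "\<dots> \<ge> (\<Sum>i\<in>UNIV. pmf (P h) i * (\<alpha> + \<beta> * (if i = a then 1 else 0) + \<gamma> * (if i \<in> N_in E a then 1 else 0)))"
    using assms by (intro sum_mono mult_left_mono) auto
  finally show ?thesis by (simp add: lin_sum)
qed

lemma R_lower:
  assumes q: "0 \<le> q" "q \<le> 1"
    and gap: "\<And>i. mu q i - c \<ge> \<alpha> + \<beta> * (if i = a then 1 else 0) + \<gamma> * (if i \<in> N_in E a then 1 else 0)"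
  shows "Ecum q T - real T * c \<ge> real T * \<alpha> + \<beta> * (\<Sum>s<T. measure_pmf.expectation (M q s) (\<lambda>h. pmf (P h) a))
           + \<gamma> * (\<Sum>s<T. measure_pmf.expectation (M q s) pi)"
proof -
  have "Ecum q T - real T * c = (\<Sum>s<T. measure_pmf.expectation (M q s) (rho q) - c)"
    by (simp add: Ecum_sum[OF q] sum_subtractf)
  also have "\<dots> \<ge> (\<Sum>s<T. \<alpha> + \<beta> * measure_pmf.expectation (M q s) (\<lambda>h. pmf (P h) a)
       + \<gamma> * measure_pmf.expectation (M q s) pi)"
  proof (intro sum_mono)
    fix s
    have "measure_pmf.expectation (M q s) (rho q) - c
        = measure_pmf.expectation (M q s) (\<lambda>h. rho q h - c)"
      using E_add[OF finite_M, of q s "rho q" "\<lambda>_. - c"] by simp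
    also have "\<dots> \<ge> measure_pmf.expectation (M q s) (\<lambda>h. \<alpha> + \<beta> * pmf (P h) a + \<gamma> * pi h)"
      by (intro E_mono[OF finite_M] rho_lower gap)
    also have "measure_pmf.expectation (M q s) (\<lambda>h. \<alpha> + \<beta> * pmf (P h) a + \<gamma> * pi h)
       = \<alpha> + \<beta> * measure_pmf.expectation (M q s) (\<lambda>h. pmf (P h) a) + \<gamma> * measure_pmf.expectation (M q s) pi"
      by (rule E_lin3[OF finite_M])
    finally show "\<alpha> + \<beta> * measure_pmf.expectation (M q s) (\<lambda>h. pmf (P h) a) + \<gamma> * measure_pmf.expectation (M q s) pi
        \<le> measure_pmf.expectation (M q s) (rho q) - c" .
  qed
  also have "(\<Sum>s<T. \<alpha> + \<beta> * measure_pmf.expectation (M q s) (\<lambda>h. pmf (P h) a)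
       + \<gamma> * measure_pmf.expectation (M q s) pi) = real T * \<alpha> + \<beta> * (\<Sum>s<T. measure_pmf.expectation (M q s) (\<lambda>h. pmf (P h) a))
           + \<gamma> * (\<Sum>s<T. measure_pmf.expectation (M q s) pi)"
    by (simp add: sum.distrib sum_distrib_left)
  finally show ?thesis .
qed

end




lemma arith_pow:
  fixes T :: nat
  defines "w \<equiv> real T powr (1/3)"
  defines "e \<equiv> 1 / (2 * w)"
  shows "0 \<le> e" "e \<le> 1/2" "e * real T - 2 * e^4 * (real T)^2 = 3/8 * real T powr (2/3)"
proof -
  show "0 \<le> e" unfolding e_def w_def by simp
  show "e \<le> 1/2"
  proof (cases "T = 0")
    case True thus ?thesis by (simp add: e_def w_def)
  next
    case False
    hence "1 \<le> w" unfolding w_def by (intro ge_one_powr_ge_zero) auto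
    thus ?thesis unfolding e_def by (simp add: field_simps)
  qed
  show "e * real T - 2 * e^4 * (real T)^2 = 3/8 * real T powr (2/3)"
  proof (cases "T = 0")
    case True thus ?thesis by (simp add: e_def w_def)
  next
    case False
    hence Tp: "0 < real T" by simp
    have wp: "0 < w" unfolding w_def using Tp by simp
    have T3: "real T = w^3"
    proof -
      have "w^3 = w powr (real 3)" using wp by (simp add: powr_realpow)
      also have "\<dots> = real T powr (1/3 * 3)" unfolding w_def by (simp add: powr_powr)
      finally show ?thesis by simp
    qed
    have T23: "real T powr (2/3) = w^2"
    proof -
      have "w^2 = w powr (real 2)" using wp by (simp add: powr_realpow)
      also have "\<dots> = real T powr (1/3 * 2)" unfolding w_def by (simp add: powr_powr)
      finally show ?thesis by simp
    qed
    show ?thesis using wp by (simp only: e_def T23) (simp add: T3 field_simps power2_eq_square power3_eq_cube power4_eq_xxxx)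
  qed
qed

lemma quad_arith:
  fixes e T S D :: real
  assumes "0 \<le> e" "0 \<le> S" "\<bar>D\<bar> \<le> T * (2 * e * sqrt S)"
  shows "e * T - e * D + S / 2 \<ge> e * T - 2 * e^4 * T^2"
proof -
  define r where "r = sqrt S"
  have r0: "0 \<le> r" and rS: "S = r^2" using assms(2) by (auto simp: r_def)
  have "e * D \<le> e * \<bar>D\<bar>" using assms(1) by (simp add: mult_left_mono)
  also have "\<dots> \<le> e * (T * (2 * e * r))" using assms(1,3) by (intro mult_left_mono) (auto simp: r_def)
  finally have h: "e * D \<le> 2 * e^2 * T * r" by (simp add: power2_eq_square ac_simps)
  have "0 \<le> (r - 2 * e^2 * T)^2 / 2" by simp
  hence "2 * e^2 * T * r - 2 * e^4 * T^2 \<le> r^2 / 2"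
    by (simp add: power2_diff field_simps power4_eq_xxxx power2_eq_square)
  thus ?thesis using h rS by linarith
qed

lemma cb_arith:
  fixes e :: real
  assumes "0 \<le> e" "e \<le> 1/2"
  shows "(1 - (sqrt ((1/2 - e) * (1/2 + e)) + sqrt ((1 - (1/2 - e)) * (1 - (1/2 + e))))) / 2 \<le> 2 * e^2"
proof -
  define z where "z = 1/4 - e^2"
  have z: "(1/2 - e) * (1/2 + e) = z" "(1 - (1/2 - e)) * (1 - (1/2 + e)) = z"
    by (simp_all add: z_def algebra_simps power2_eq_square)
  have "e^2 \<le> (1/2)^2" using assms by (intro power_mono) auto
  hence z0: "0 \<le> z" unfolding z_def by (simp add: power_divide)
  define s where "s = sqrt z"
  have s0: "0 \<le> s" and sz: "s^2 = z" using z0 by (auto simp: s_def)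
  have "s \<le> sqrt (1/4)" unfolding s_def z_def by (intro real_sqrt_le_mono) simp
  also have "sqrt (1/4) = (1/2::real)" by (simp add: real_sqrt_divide)
  finally have s2: "s \<le> 1/2" .
  have "s * (2 * s) \<le> s * 1" using s0 s2 by (intro mult_left_mono) auto
  hence "2 * s^2 \<le> s" by (simp add: power2_eq_square ac_simps)
  thus ?thesis unfolding z s_def[symmetric] using sz unfolding z_def by simp
qed


context lb begin

lemma E_nonneg:
  fixes f :: "'v history \<Rightarrow> real"
  assumes "\<And>x. 0 \<le> f x"
  shows "0 \<le> measure_pmf.expectation (M q s) f"
  using E_mono[OF finite_M, of q s "\<lambda>_. 0" f] assms by simp

lemma cb_eq:
  assumes "0 \<le> q1" "q1 \<le> 1" "0 \<le> q2" "q2 \<le> 1"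
  shows "cb q1 q2 = sqrt (q1 * q2) + sqrt ((1 - q1) * (1 - q2))"
  using assms by (simp add: cb_def UNIV_bool)

lemma final:
  "\<exists>x. expected_regret E P (lx x) T \<ge> (1/8) * real T powr (2/3)"
proof -
  define w where "w = real T powr (1/3)"
  define e where "e = 1 / (2 * w)"
  have e0: "0 \<le> e" and e1: "e \<le> 1/2" and key: "e * real T - 2 * e^4 * (real T)^2 = 3/8 * real T powr (2/3)"
    using arith_pow[of T] unfolding w_def e_def by auto
  define q1 where "q1 = 1/2 - e"
  define q2 where "q2 = 1/2 + e"
  have q1: "0 \<le> q1" "q1 \<le> 1" and q2: "0 \<le> q2" "q2 \<le> 1" using e0 e1 by (auto simp: q1_def q2_def)
  have cbe: "cb q1 q2 = sqrt (q1 * q2) + sqrt ((1 - q1) * (1 - q2))" by (rule cb_eq[OF q1 q2])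
  have cbb: "(1 - cb q1 q2) / 2 \<le> 2 * e^2"
  proof -
    have "(1 - cb q1 q2) / 2 = (1 - (sqrt (q1 * q2) + sqrt ((1 - q1) * (1 - q2)))) / 2" by (simp only: cbe)
    also have "\<dots> \<le> 2 * e^2" unfolding q1_def q2_def by (rule cb_arith[OF e0 e1])
    finally show ?thesis .
  qed
  have cb1: "0 \<le> (1 - cb q1 q2) / 2" using cb_le1[of q1 q2] by simp
  let ?F = "\<lambda>s. measure_pmf.expectation (M q1 s) pi + measure_pmf.expectation (M q2 s) pi"
  let ?phi = "\<lambda>h. pmf (P h) a"
  define N1 where "N1 = (\<Sum>s<T. measure_pmf.expectation (M q1 s) pi)"
  define N2 where "N2 = (\<Sum>s<T. measure_pmf.expectation (M q2 s) pi)"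
  define A1 where "A1 = (\<Sum>s<T. measure_pmf.expectation (M q1 s) ?phi)"
  define A2 where "A2 = (\<Sum>s<T. measure_pmf.expectation (M q2 s) ?phi)"
  define S where "S = N1 + N2"
  have F0: "0 \<le> ?F s" for s using E_nonneg[of pi q1 s] E_nonneg[of pi q2 s] pi_nonneg by auto
  have S_eq: "S = (\<Sum>s<T. ?F s)" unfolding S_def N1_def N2_def by (simp add: sum.distrib)
  have S0: "0 \<le> S" unfolding S_eq using F0 by (auto intro: sum_nonneg)
  have tv: "\<bar>measure_pmf.expectation (M q1 s) ?phi - measure_pmf.expectation (M q2 s) ?phi\<bar> \<le> 2 * e * sqrt S"
    if s: "s < T" for s
  proof -
    have ss: "(\<Sum>r<s. ?F r) \<le> S" unfolding S_eq using s F0 by (intro sum_mono2) auto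
    have ss0: "0 \<le> (\<Sum>r<s. ?F r)" using F0 by (auto intro: sum_nonneg)
    have "1 - BCt q1 q2 s \<le> (1 - cb q1 q2) / 2 * (\<Sum>r<s. ?F r)" by (rule BCt_bound)
    also have "\<dots> \<le> 2 * e^2 * (\<Sum>r<s. ?F r)" using cbb ss0 by (rule mult_right_mono)
    also have "\<dots> \<le> 2 * e^2 * S" using ss by (intro mult_left_mono) auto
    finally have b: "2 - 2 * BCt q1 q2 s \<le> (2 * e)^2 * S" by (simp add: power2_eq_square)
    have "\<bar>measure_pmf.expectation (M q1 s) ?phi - measure_pmf.expectation (M q2 s) ?phi\<bar>
        \<le> sqrt (2 - 2 * BC (SS q1 q2 s) (M q1 s) (M q2 s))"
      by (rule TV_BC) (auto simp: finite_SS SS_def pmf_le_1 finite_M)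
    also have "\<dots> \<le> sqrt ((2 * e)^2 * S)" using b unfolding BCt_def by (rule real_sqrt_le_mono)
    also have "\<dots> = 2 * e * sqrt S" using e0 by (simp add: real_sqrt_mult)
    finally show ?thesis .
  qed
  have AD: "\<bar>A1 - A2\<bar> \<le> real T * (2 * e * sqrt S)"
  proof -
    have "\<bar>A1 - A2\<bar> = \<bar>\<Sum>s<T. measure_pmf.expectation (M q1 s) ?phi - measure_pmf.expectation (M q2 s) ?phi\<bar>"
      unfolding A1_def A2_def by (simp add: sum_subtractf)
    also have "\<dots> \<le> (\<Sum>s<T. \<bar>measure_pmf.expectation (M q1 s) ?phi - measure_pmf.expectation (M q2 s) ?phi\<bar>)"
      by (rule sum_abs)
    also have "\<dots> \<le> real (card {..<T}) * (2 * e * sqrt S)"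
      by (rule sum_bounded_above) (use tv in auto)
    finally show ?thesis by simp
  qed
  have R1: "Ecum q1 T - real T * q1 \<ge> real T * e + (- e) * A1 + 1/2 * N1"
    unfolding A1_def N1_def
  proof (rule R_lower[OF q1])
    fix i
    show "mu q1 i - q1 \<ge> e + (- e) * (if i = a then 1 else 0) + 1/2 * (if i \<in> N_in E a then 1 else 0)"
      using aN bN ab by (auto simp: mu_def q1_def)
  qed
  have R2: "Ecum q2 T - real T * (1/2) \<ge> real T * 0 + e * A2 + 1/2 * N2"
    unfolding A2_def N2_def
  proof (rule R_lower[OF q2])
    fix i
    show "mu q2 i - 1/2 \<ge> 0 + e * (if i = a then 1 else 0) + 1/2 * (if i \<in> N_in E a then 1 else 0)"
      using aN bN ab by (auto simp: mu_def q2_def)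
  qed
  have "e * real T - e * (A1 - A2) + S / 2 \<ge> e * real T - 2 * e^4 * (real T)^2"
    by (rule quad_arith[OF e0 S0 AD])
  hence sum: "(Ecum q1 T - real T * q1) + (Ecum q2 T - real T * (1/2)) \<ge> 3/8 * real T powr (2/3)"
  proof -
    have m1: "e * (A1 - A2) = e * A1 - e * A2" by (simp add: algebra_simps)
    have m2: "real T * e = e * real T" by simp
    have m3: "(- e) * A1 = - (e * A1)" by simp
    show ?thesis using \<open>e * real T - e * (A1 - A2) + S / 2 \<ge> e * real T - 2 * e^4 * (real T)^2\<close>
      R1 R2 key m1 m2 m3 unfolding S_def by argo
  qed
  have Z0: "0 \<le> real T powr (2/3)" by simp
  show ?thesis
  proof (cases "Ecum q1 T - real T * q1 \<ge> 3/16 * real T powr (2/3)")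
    case True
    have "Ecum q1 T - real T * q1 \<le> measure_pmf.expectation (X q1 T) (\<lambda>x. expected_regret E P (lx x) T)"
      using avg_regret[OF q1, of T a] by (simp add: mu_def)
    moreover obtain x where "measure_pmf.expectation (X q1 T) (\<lambda>x. expected_regret E P (lx x) T) \<le> expected_regret E P (lx x) T"
      using E_exists_ge[OF finite_X] by blast
    ultimately have "1/8 * real T powr (2/3) \<le> expected_regret E P (lx x) T" using True Z0 by argo
    thus ?thesis by blast
  next
    case False
    hence "Ecum q2 T - real T * (1/2) \<ge> 3/16 * real T powr (2/3)" using sum by linarith
    moreover have "Ecum q2 T - real T * (1/2) \<le> measure_pmf.expectation (X q2 T) (\<lambda>x. expected_regret E P (lx x) T)"
      using avg_regret[OF q2, of T b] ab by (simp add: mu_def)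
    moreover obtain x where "measure_pmf.expectation (X q2 T) (\<lambda>x. expected_regret E P (lx x) T) \<le> expected_regret E P (lx x) T"
      using E_exists_ge[OF finite_X] by blast
    ultimately have "1/8 * real T powr (2/3) \<le> expected_regret E P (lx x) T" using Z0 by argo
    thus ?thesis by blast
  qed
qed

end

theorem theorem11:
  fixes E :: "('v::finite \<times> 'v) set"
  assumes "weakly_observable E"
    and "CARD('v) \<ge> 2"
  shows "\<forall>(P :: 'v player) (T :: nat). \<exists>l :: nat \<Rightarrow> 'v \<Rightarrow> real.
           (\<forall>t\<in>{1..T}. \<forall>i. 0 \<le> l t i \<and> l t i \<le> 1) \<and>
           expected_regret E P l T \<ge> (1/8) * real T powr (2/3)"
proof (intro allI)
  fix P :: "'v player" and T :: nat
  from assms(1) obtain a where na: "\<not> strongly_observable E a"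
    unfolding weakly_observable_def by blast
  hence naa: "(a, a) \<notin> E" and "\<not> (UNIV - {a} \<subseteq> N_in E a)"
    unfolding strongly_observable_def N_in_def by auto
  then obtain b where ba: "b \<noteq> a" and nba: "(b, a) \<notin> E" unfolding N_in_def by auto
  interpret lb E P a b by unfold_locales (use ba naa nba in auto)
  obtain x where x: "expected_regret E P (lx x) T \<ge> (1/8) * real T powr (2/3)" using final by blast
  show "\<exists>l :: nat \<Rightarrow> 'v \<Rightarrow> real. (\<forall>t\<in>{1..T}. \<forall>i. 0 \<le> l t i \<and> l t i \<le> 1) \<and>
           expected_regret E P l T \<ge> (1/8) * real T powr (2/3)"
    by (rule exI[of _ "lx x"]) (use x in \<open>auto simp: lx_def lc_def\<close>)
qed


end
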